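(* Let $m\in[0,1]$, $n=\sqrt{1-m^2}$, and for $k\in[-\pi,\pi]$ define $\omega=\arccos(n\cos k)\in[0,\pi]$, $\omega_{\rm D}=\sqrt{k^2+m^2}$, $v=\frac{n\sin k}{\sin\omega}$, $v_{\rm D}=\frac{k}{\sqrt{k^2+m^2}}$, $$\alpha(k,m)=\omega_{\rm D}-\omega,\qquad \beta(k,m)=1-v\,v_{\rm D}-\sqrt{(1-v^2)(1-v_{\rm D}^2)},$$ $$H(k)=\frac{\omega}{\sin\omega}\begin{pmatrix}-n\sin k & m\\ m & n\sin k\end{pmatrix},\qquad H_{\rm D}(k)=\begin{pmatrix}-k & m\\ m & k\end{pmatrix},$$ $V(k,t)=e^{-iH_{\rm D}(k)t}\,\big(e^{-iH(k)t}\big)^\dagger$, and let $\mu(k,m,t)\in[0,\pi]$ be such that the eigenvalues of the $SU(2)$ matrix $V(k,t)$ are $e^{\pm i\mu(k,m,t)}$. Let $0\le\bar k<\pi$, let $N$ be a positive integer, and put $$\bar\alpha=\max_{k\in[-\bar k,\bar k]}|\alpha(k,m)|,\qquad \bar\beta=\max_{k\in[-\bar k,\bar k]}|\beta(k,m)|,\qquad f(\bar k,m,N)=\frac{\arccos\!\big(\cos(\tfrac{\pi}{2N})+\bar\beta\big)}{\bar\alpha}.$$ If $\bar\beta\le 1-\cos(\tfrac{\pi}{2N})$ and $0\le t\le f(\bar k,m,N)$, then for every $k\in[-\bar k,\bar k]$ $$N\,\mu(k,m,t)\ \le\ g(\bar k,m,N,t)\ \le\ \frac{\pi}{2},\qquad\text{where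 } g(\bar k,m,N,t):=N\arccos\!\big(\cos(\bar\alpha t)-\bar\beta\big).$$
   Context: $H(k)$ is the momentum-space effective Hamiltonian of the one-dimensional Dirac quantum cellular automaton with mass parameter $m$, and $H_{\rm D}(k)$ the one-dimensional Dirac Hamiltonian in Planck units; both are traceless, so $V(k,t)\in SU(2)$. *)

theory Defs
  imports "HOL-Analysis.Analysis"
begin

type_synonym cmat2 = "complex^2^2"

definition mpow :: "cmat2 \<Rightarrow> nat \<Rightarrow> cmat2" where
  "mpow A j = (((**) A) ^^ j) (mat 1)"

definition mexp :: "cmat2 \<Rightarrow> cmat2" where
  "mexp A = (\<Sum>j. (1 / fact j :: real) *\<^sub>R mpow A j)"

definition adj :: "cmat2 \<Rightarrow> cmat2" where
  "adj A = (\<chi> i j. cnj (A $ j $ i))"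

definition mat2 :: "complex \<Rightarrow> complex \<Rightarrow> complex \<Rightarrow> complex \<Rightarrow> cmat2" where
  "mat2 a b c d = vector [vector [a, b], vector [c, d]]"

definition nn :: "real \<Rightarrow> real" where "nn m = sqrt (1 - m\<^sup>2)"
definition om :: "real \<Rightarrow> real \<Rightarrow> real" where "om k m = arccos (nn m * cos k)"
definition omD :: "real \<Rightarrow> real \<Rightarrow> real" where "omD k m = sqrt (k\<^sup>2 + m\<^sup>2)"
definition vel :: "real \<Rightarrow> real \<Rightarrow> real" where "vel k m = nn m * sin k / sin (om k m)"
definition velD :: "real \<Rightarrow> real \<Rightarrow> real" where "velD k m = k / sqrt (k\<^sup>2 + m\<^sup>2)"

definition alpha :: "real \<Rightarrow> real \<Rightarrow> real" where "alpha k m = omD k m - om k m"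
definition beta :: "real \<Rightarrow> real \<Rightarrow> real" where
  "beta k m = 1 - vel k m * velD k m - sqrt ((1 - (vel k m)\<^sup>2) * (1 - (velD k m)\<^sup>2))"

definition HQ :: "real \<Rightarrow> real \<Rightarrow> cmat2" where
  "HQ k m = (om k m / sin (om k m)) *\<^sub>R
     mat2 (- of_real (nn m * sin k)) (of_real m) (of_real m) (of_real (nn m * sin k))"
definition HD :: "real \<Rightarrow> real \<Rightarrow> cmat2" where
  "HD k m = mat2 (- of_real k) (of_real m) (of_real m) (of_real k)"

definition cscale :: "complex \<Rightarrow> cmat2 \<Rightarrow> cmat2" where
  "cscale c A = (\<chi> i j. c * A $ i $ j)"

definition Vmat :: "real \<Rightarrow> real \<Rightarrow> real \<Rightarrow> cmat2" where
  "Vmat k m t = mexp (cscale (- \<i> * of_real t) (HD k m)) ** adj (mexp (cscale (- \<i> * of_real t) (HQ k m)))"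

definition is_eigenvalue2 :: "cmat2 \<Rightarrow> complex \<Rightarrow> bool" where
  "is_eigenvalue2 A l \<longleftrightarrow> (\<exists>x. x \<noteq> 0 \<and> A *v x = l *s x)"

definition alpha_bar :: "real \<Rightarrow> real \<Rightarrow> real" where
  "alpha_bar kb m = (SUP k\<in>{-kb..kb}. \<bar>alpha k m\<bar>)"
definition beta_bar :: "real \<Rightarrow> real \<Rightarrow> real" where
  "beta_bar kb m = (SUP k\<in>{-kb..kb}. \<bar>beta k m\<bar>)"

definition gfun :: "real \<Rightarrow> real \<Rightarrow> nat \<Rightarrow> real \<Rightarrow> real" where
  "gfun kb m N t = real N * arccos (cos (alpha_bar kb m * t) - beta_bar kb m)"

end

theory Submission
  imports Defs
begin

lemma mat2_nth[simp]:
  "mat2 a b c d $ 1 $ 1 = a" "mat2 a b c d $ 1 $ 2 = b"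
  "mat2 a b c d $ 2 $ 1 = c" "mat2 a b c d $ 2 $ 2 = d"
  by (simp_all add: mat2_def)

lemma cmat2_eq_iff: "(A::cmat2) = B \<longleftrightarrow> A$1$1 = B$1$1 \<and> A$1$2 = B$1$2 \<and> A$2$1 = B$2$1 \<and> A$2$2 = B$2$2"
  by (simp add: vec_eq_iff forall_2)

lemma mat2_eta: "(A::cmat2) = mat2 (A$1$1) (A$1$2) (A$2$1) (A$2$2)"
  unfolding cmat2_eq_iff[of A] by simp

lemma mat2_eq[simp]: "mat2 a b c d = mat2 a' b' c' d' \<longleftrightarrow> a = a' \<and> b = b' \<and> c = c' \<and> d = d'"
  unfolding cmat2_eq_iff[of "mat2 a b c d"] by simp

lemma mat2_mult: "mat2 a b c d ** mat2 e f g h = mat2 (a*e+b*g) (a*f+b*h) (c*e+d*g) (c*f+d*h)"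
  by (simp add: cmat2_eq_iff matrix_matrix_mult_def sum_2)

lemma mat2_one: "(mat 1 :: cmat2) = mat2 1 0 0 1"
  by (simp add: cmat2_eq_iff mat_def)

lemma mat2_zero: "(0 :: cmat2) = mat2 0 0 0 0"
  by (simp add: cmat2_eq_iff)

lemma mat2_add: "mat2 a b c d + mat2 e f g h = mat2 (a+e) (b+f) (c+g) (d+h)"
  by (simp add: cmat2_eq_iff)

lemma mat2_uminus: "- mat2 a b c d = mat2 (-a) (-b) (-c) (-d)"
  by (simp add: cmat2_eq_iff)

lemma mat2_scaleR: "r *\<^sub>R mat2 a b c d = mat2 (r*a) (r*b) (r*c) (r*d)"
  apply (simp only: cmat2_eq_iff vector_scaleR_component mat2_nth)
  apply (simp add: scaleR_conv_of_real)
  done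

lemma mat2_cscale: "cscale z (mat2 a b c d) = mat2 (z*a) (z*b) (z*c) (z*d)"
  by (simp add: cmat2_eq_iff cscale_def)

lemma mat2_adj: "adj (mat2 a b c d) = mat2 (cnj a) (cnj c) (cnj b) (cnj d)"
  by (simp add: cmat2_eq_iff adj_def)

lemma mat2_mulv: "(mat2 a b c d *v x) $ 1 = a * x$1 + b * x$2" "(mat2 a b c d *v x) $ 2 = c * x$1 + d * x$2"
  by (simp_all add: matrix_vector_mult_def sum_2)

lemma mpow_0[simp]: "mpow A 0 = mat 1" by (simp add: mpow_def)
lemma mpow_Suc: "mpow A (Suc j) = A ** mpow A j" by (simp add: mpow_def)

lemma scaleR_mmult_left0: "((r::real) *\<^sub>R mat2 a b c d) ** mat2 e f g h = r *\<^sub>R (mat2 a b c d ** mat2 e f g h)"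
  by (simp add: mat2_scaleR mat2_mult algebra_simps)
lemma scaleR_mmult_right0: "mat2 a b c d ** ((r::real) *\<^sub>R mat2 e f g h) = r *\<^sub>R (mat2 a b c d ** mat2 e f g h)"
  by (simp add: mat2_scaleR mat2_mult algebra_simps)

lemma scaleR_mmult_left: "((r::real) *\<^sub>R (A::cmat2)) ** (B::cmat2) = r *\<^sub>R (A ** B)"
  by (metis mat2_eta scaleR_mmult_left0)

lemma scaleR_mmult_right: "(A::cmat2) ** ((r::real) *\<^sub>R (B::cmat2)) = r *\<^sub>R (A ** B)"
  by (metis mat2_eta scaleR_mmult_right0)

lemma mpow_scaleR: "mpow (s *\<^sub>R N) j = s^j *\<^sub>R mpow N j"
  by (induction j) (simp_all add: mpow_Suc scaleR_mmult_left scaleR_mmult_right)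

lemma mpow_SS:
  assumes "N ** N = - mat 1"
  shows "mpow N (Suc (Suc i)) = - mpow N i"
proof -
  have "mpow N (Suc (Suc i)) = (N ** N) ** mpow N i"
    by (simp add: mpow_Suc matrix_mul_assoc)
  also have "\<dots> = ((-1::real) *\<^sub>R mat 1) ** mpow N i" using assms by simp
  also have "\<dots> = - mpow N i" by (simp only: scaleR_mmult_left matrix_mul_lid) simp
  finally show ?thesis .
qed

lemma mpow_even:
  assumes "N ** N = - mat 1"
  shows "mpow N (2*l) = (-1)^l *\<^sub>R mat 1"
proof (induction l)
  case 0 then show ?case by simp
next
  case (Suc l)
  have "2 * Suc l = Suc (Suc (2*l))" by simp
  then show ?case using Suc mpow_SS[OF assms, of "2*l"] by simp
qed

lemma mpow_odd:
  assumes "N ** N = - mat 1"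
  shows "mpow N (Suc (2*l)) = (-1)^l *\<^sub>R N"
proof (induction l)
  case 0 then show ?case by (simp add: mpow_Suc)
next
  case (Suc l)
  have "Suc (2 * Suc l) = Suc (Suc (Suc (2*l)))" by simp
  then show ?case using Suc mpow_SS[OF assms, of "Suc (2*l)"] by simp
qed

lemma mexp_scaleR:
  assumes "N ** N = - mat 1"
  shows "mexp (s *\<^sub>R N) = cos s *\<^sub>R mat 1 + sin s *\<^sub>R N"
proof -
  have trm: "(1 / fact j :: real) *\<^sub>R mpow (s *\<^sub>R N) j
      = (cos_coeff j * s^j) *\<^sub>R mat 1 + (sin_coeff j * s^j) *\<^sub>R N" for j
  proof (cases "even j")
    case True
    then obtain l where l: "j = 2*l" by blast
    show ?thesis
      by (simp add: l mpow_scaleR mpow_even[OF assms] cos_coeff_def sin_coeff_def)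
  next
    case False
    then obtain l where l: "j = 2*l+1" using oddE by blast
    have "(2*l+1 - 1) div 2 = l" "(2*l+1) div 2 = l" by simp_all
    then show ?thesis
      by (simp add: l mpow_scaleR mpow_odd[OF assms] cos_coeff_def sin_coeff_def)
  qed
  have "(\<lambda>j. (cos_coeff j * s^j) *\<^sub>R (mat 1::cmat2) + (sin_coeff j * s^j) *\<^sub>R N) sums
        (cos s *\<^sub>R mat 1 + sin s *\<^sub>R N)"
    using sums_add[OF sums_scaleR_left[OF cos_converges[of s]] sums_scaleR_left[OF sin_converges[of s]]]
    by simp
  then have "(\<lambda>j. (1 / fact j :: real) *\<^sub>R mpow (s *\<^sub>R N) j) sums (cos s *\<^sub>R mat 1 + sin s *\<^sub>R N)"
    by (simp add: trm)
  then show ?thesis unfolding mexp_def by (rule sums_unique[symmetric])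
qed


definition Nm :: "real \<Rightarrow> real \<Rightarrow> cmat2" where
  "Nm x y = mat2 (\<i> * of_real (x / sqrt (x\<^sup>2 + y\<^sup>2))) (- \<i> * of_real (y / sqrt (x\<^sup>2 + y\<^sup>2)))
                 (- \<i> * of_real (y / sqrt (x\<^sup>2 + y\<^sup>2))) (- \<i> * of_real (x / sqrt (x\<^sup>2 + y\<^sup>2)))"

lemma mexp_M0:
  fixes x y \<tau> :: real
  shows "mexp (cscale (- \<i> * of_real \<tau>) (mat2 (- of_real x) (of_real y) (of_real y) (of_real x)))
     = cos (sqrt (x\<^sup>2 + y\<^sup>2) * \<tau>) *\<^sub>R mat 1 + sin (sqrt (x\<^sup>2 + y\<^sup>2) * \<tau>) *\<^sub>R Nm x y"
proof (cases "x\<^sup>2 + y\<^sup>2 = 0")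
  case True
  then have xy: "x = 0" "y = 0" by (auto simp: sum_power2_eq_zero_iff)
  define N0 :: cmat2 where "N0 = mat2 \<i> 0 0 (- \<i>)"
  have "N0 ** N0 = - mat 1" by (simp add: N0_def mat2_mult mat2_one mat2_uminus)
  from mexp_scaleR[OF this, of 0]
  have "mexp 0 = mat 1" by simp
  moreover have "cscale c 0 = 0" for c by (simp add: mat2_zero mat2_cscale)
  ultimately show ?thesis by (simp add: xy mat2_zero[symmetric])
next
  case False
  define r where "r = sqrt (x\<^sup>2 + y\<^sup>2)"
  have r0: "r \<noteq> 0" using False by (simp add: r_def)
  have rr: "r * r = x\<^sup>2 + y\<^sup>2" unfolding r_def
    using real_sqrt_mult_self[of "x\<^sup>2+y\<^sup>2"] by simp
  have ab: "(x/r) * (x/r) + (y/r) * (y/r) = 1"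
  proof -
    have "(x/r) * (x/r) + (y/r) * (y/r) = (x\<^sup>2 + y\<^sup>2) / (r*r)"
      by (simp add: power2_eq_square add_divide_distrib)
    then show ?thesis using rr r0 False by simp
  qed
  have abc: "complex_of_real (x/r) * of_real (x/r) + of_real (y/r) * of_real (y/r) = 1"
    by (metis ab of_real_mult of_real_add of_real_1)
  have e1: "\<i> * a * (\<i> * a) + - \<i> * b * (- \<i> * b) = - (a*a + b*b)" for a b :: complex
    by (simp add: algebra_simps)
  have e2: "\<i> * a * (- \<i> * b) + - \<i> * b * (- \<i> * a) = 0" for a b :: complex
    by (simp add: algebra_simps)
  have e3: "- \<i> * b * (\<i> * a) + - \<i> * a * (- \<i> * b) = 0" for a b :: complex
    by (simp add: algebra_simps)
  have e4: "- \<i> * b * (- \<i> * b) + - \<i> * a * (- \<i> * a) = - (a*a + b*b)" for a b :: complex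
    by (simp add: algebra_simps)
  have NN: "Nm x y ** Nm x y = - mat 1"
    unfolding Nm_def r_def[symmetric] mat2_mult e1 e2 e3 e4 abc mat2_one mat2_uminus
    by simp
  have eq: "cscale (- \<i> * of_real \<tau>) (mat2 (- of_real x) (of_real y) (of_real y) (of_real x))
        = (r * \<tau>) *\<^sub>R Nm x y"
    unfolding Nm_def r_def[symmetric] using r0
    by (simp add: mat2_cscale mat2_scaleR)
  show ?thesis using mexp_scaleR[OF NN, of "r*\<tau>"] eq by (simp add: r_def)
qed


lemma E_form:
  fixes c s x y :: real
  shows "c *\<^sub>R mat 1 + s *\<^sub>R Nm x y =
    mat2 (Complex c (s * (x / sqrt (x\<^sup>2 + y\<^sup>2)))) (Complex 0 (- (s * (y / sqrt (x\<^sup>2 + y\<^sup>2)))))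
         (Complex 0 (- (s * (y / sqrt (x\<^sup>2 + y\<^sup>2))))) (Complex c (- (s * (x / sqrt (x\<^sup>2 + y\<^sup>2)))))"
  unfolding Nm_def mat2_one mat2_scaleR mat2_add
  by (simp add: complex_eq_iff)

lemma det_mult2:
  fixes a b c d e f g h :: complex
  shows "(a*e+b*g)*(c*f+d*h) - (a*f+b*h)*(c*e+d*g) = (a*d - b*c)*(e*h - f*g)"
  by (simp add: algebra_simps)

lemma det_E:
  fixes c s a b :: real
  shows "Complex c (s*a) * Complex c (-(s*a)) - Complex 0 (-(s*b)) * Complex 0 (-(s*b))
       = of_real (c\<^sup>2 + s\<^sup>2 * (a\<^sup>2 + b\<^sup>2))"
  by (simp add: complex_eq_iff algebra_simps power2_eq_square)

lemma det_Eadj: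
  fixes c s a b :: real
  shows "Complex c (-(s*a)) * Complex c (s*a) - Complex 0 (s*b) * Complex 0 (s*b)
       = of_real (c\<^sup>2 + s\<^sup>2 * (a\<^sup>2 + b\<^sup>2))"
  by (simp add: complex_eq_iff algebra_simps power2_eq_square)

lemma trace_prod:
  fixes c1 s1 a1 b1 c2 s2 a2 b2 :: real
  shows "Complex c1 (s1 * a1) * Complex c2 (-(s2 * a2)) + Complex 0 (-(s1 * b1)) * Complex 0 (s2 * b2)
       + (Complex 0 (-(s1 * b1)) * Complex 0 (s2 * b2) + Complex c1 (-(s1 * a1)) * Complex c2 (s2 * a2))
       = of_real (2 * (c1*c2 + s1 * s2*(a1*a2 + b1*b2)))"
  by (simp add: complex_eq_iff algebra_simps)

lemma eig2:
  assumes "is_eigenvalue2 (mat2 p q r s) l"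
  shows "(p - l) * (s - l) - q * r = 0"
proof -
  obtain x where x: "x \<noteq> 0" "mat2 p q r s *v x = l *s x"
    using assms unfolding is_eigenvalue2_def by blast
  have e1: "p * x$1 + q * x$2 = l * x$1" and e2: "r * x$1 + s * x$2 = l * x$2"
    using x(2) mat2_mulv[of p q r s x] by (metis vector_smult_component)+
  have f1: "(p - l) * x$1 + q * x$2 = 0"
  proof -
    have "(p - l) * x$1 + q * x$2 = (p * x$1 + q * x$2) - l * x$1" by (simp add: algebra_simps)
    then show ?thesis using e1 by simp
  qed
  have f2: "r * x$1 + (s - l) * x$2 = 0"
  proof -
    have "r * x$1 + (s - l) * x$2 = (r * x$1 + s * x$2) - l * x$2" by (simp add: algebra_simps)
    then show ?thesis using e2 by simp
  qed
  have "((p - l) * (s - l) - q * r) * x$1 = (s - l) * ((p - l) * x$1 + q * x$2) - q * (r * x$1 + (s - l) * x$2)"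
    by (simp add: algebra_simps)
  then have z1: "((p - l) * (s - l) - q * r) * x$1 = 0" using f1 f2 by simp
  have "((p - l) * (s - l) - q * r) * x$2 = (p - l) * (r * x$1 + (s - l) * x$2) - r * ((p - l) * x$1 + q * x$2)"
    by (simp add: algebra_simps)
  then have z2: "((p - l) * (s - l) - q * r) * x$2 = 0" using f1 f2 by simp
  have "x$1 \<noteq> 0 \<or> x$2 \<noteq> 0" using x(1) by (simp add: vec_eq_iff forall_2)
  then show ?thesis using z1 z2 by auto
qed

lemma cis_eig:
  assumes "is_eigenvalue2 (mat2 p q r s) (cis \<mu>)"
    and "p + s = of_real T" and "p * s - q * r = 1"
  shows "cos \<mu> = T / 2"
proof -
  let ?l = "cis \<mu>"
  have "(p - ?l) * (s - ?l) - q * r = 0" by (rule eig2[OF assms(1)])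
  then have "?l * ?l - (p + s) * ?l + (p * s - q * r) = 0" by (simp add: algebra_simps)
  then have "?l * ?l - of_real T * ?l + 1 = 0" using assms(2,3) by simp
  then have "(?l * ?l - of_real T * ?l + 1) * cis (-\<mu>) = 0" by simp
  moreover have "?l * cis (-\<mu>) = 1" by (simp add: cis_mult)
  ultimately have "?l - of_real T + cis (-\<mu>) = 0"
    by (simp add: algebra_simps)
  then have "Re (?l - of_real T + cis (-\<mu>)) = 0" by simp
  then show ?thesis by simp
qed


lemma det_one:
  fixes x y \<tau> :: real
  shows "(cos (sqrt (x\<^sup>2 + y\<^sup>2) * \<tau>))\<^sup>2 + (sin (sqrt (x\<^sup>2 + y\<^sup>2) * \<tau>))\<^sup>2 *
          ((x / sqrt (x\<^sup>2 + y\<^sup>2))\<^sup>2 + (y / sqrt (x\<^sup>2 + y\<^sup>2))\<^sup>2) = 1"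
proof (cases "x\<^sup>2 + y\<^sup>2 = 0")
  case True then show ?thesis by simp
next
  case False
  have "(x / sqrt (x\<^sup>2 + y\<^sup>2))\<^sup>2 + (y / sqrt (x\<^sup>2 + y\<^sup>2))\<^sup>2 = 1"
    using False by (simp add: power_divide add_divide_distrib[symmetric])
  then show ?thesis by simp
qed

lemma cscale_scaleR: "cscale z (q *\<^sub>R mat2 a b c d) = cscale (z * of_real q) (mat2 a b c d)"
  by (simp add: mat2_cscale mat2_scaleR algebra_simps)

lemma E_adj:
  "adj (mat2 (Complex c (s * a)) (Complex 0 (- (s * b))) (Complex 0 (- (s * b))) (Complex c (- (s * a))))
   = mat2 (Complex c (- (s * a))) (Complex 0 (s * b)) (Complex 0 (s * b)) (Complex c (s * a))"
  by (simp add: mat2_adj complex_cnj)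

lemma V_cos:
  fixes k m t \<mu> :: real
  defines "x2 \<equiv> nn m * sin k"
  defines "r1 \<equiv> sqrt (k\<^sup>2 + m\<^sup>2)" and "r2 \<equiv> sqrt (x2\<^sup>2 + m\<^sup>2)"
  defines "\<tau> \<equiv> om k m / sin (om k m) * t"
  assumes eig: "is_eigenvalue2 (Vmat k m t) (cis \<mu>)"
  shows "cos \<mu> = cos (r1 * t) * cos (r2 * \<tau>) + sin (r1 * t) * sin (r2 * \<tau>) *
            ((k / r1) * (x2 / r2) + (m / r1) * (m / r2))"
proof -
  define c1 where "c1 = cos (r1 * t)"
  define s1 where "s1 = sin (r1 * t)"
  define a1 where "a1 = k / r1"
  define b1 where "b1 = m / r1"
  define c2 where "c2 = cos (r2 * \<tau>)"
  define s2 where "s2 = sin (r2 * \<tau>)"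
  define a2 where "a2 = x2 / r2"
  define b2 where "b2 = m / r2"
  have ED: "mexp (cscale (- \<i> * of_real t) (HD k m)) =
     mat2 (Complex c1 (s1 * a1)) (Complex 0 (- (s1 * b1))) (Complex 0 (- (s1 * b1))) (Complex c1 (- (s1 * a1)))"
    unfolding HD_def mexp_M0 E_form c1_def s1_def a1_def b1_def r1_def by simp
  have hq: "cscale (- \<i> * of_real t) (HQ k m) = cscale (- \<i> * of_real \<tau>)
          (mat2 (- of_real x2) (of_real m) (of_real m) (of_real x2))"
    unfolding HQ_def cscale_scaleR \<tau>_def x2_def by (simp add: algebra_simps)
  have EQ0: "mexp (cscale (- \<i> * of_real \<tau>) (mat2 (- of_real x2) (of_real m) (of_real m) (of_real x2))) =
     mat2 (Complex c2 (s2 * a2)) (Complex 0 (- (s2 * b2))) (Complex 0 (- (s2 * b2))) (Complex c2 (- (s2 * a2)))"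
    unfolding mexp_M0 E_form c2_def s2_def a2_def b2_def r2_def by simp
  have EQ: "mexp (cscale (- \<i> * of_real t) (HQ k m)) =
     mat2 (Complex c2 (s2 * a2)) (Complex 0 (- (s2 * b2))) (Complex 0 (- (s2 * b2))) (Complex c2 (- (s2 * a2)))"
    by (simp only: hq EQ0)
  have V: "Vmat k m t = mat2 (Complex c1 (s1 * a1)) (Complex 0 (- (s1 * b1))) (Complex 0 (- (s1 * b1))) (Complex c1 (- (s1 * a1)))
      ** mat2 (Complex c2 (- (s2 * a2))) (Complex 0 (s2 * b2)) (Complex 0 (s2 * b2)) (Complex c2 (s2 * a2))"
    unfolding Vmat_def ED EQ E_adj ..
  have d1: "c1\<^sup>2 + s1\<^sup>2 * (a1\<^sup>2 + b1\<^sup>2) = 1"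
    unfolding c1_def s1_def a1_def b1_def r1_def by (rule det_one)
  have d2: "c2\<^sup>2 + s2\<^sup>2 * (a2\<^sup>2 + b2\<^sup>2) = 1"
    unfolding c2_def s2_def a2_def b2_def r2_def by (rule det_one)
  have "cos \<mu> = 2 * (c1 * c2 + s1 * s2 * (a1 * a2 + b1 * b2)) / 2"
    apply (rule cis_eig[where T = "2 * (c1 * c2 + s1 * s2 * (a1 * a2 + b1 * b2))"])
      apply (rule eig[unfolded V mat2_mult])
     apply (rule trace_prod)
    apply (subst det_mult2)
    apply (simp only: det_E det_Eadj d1 d2)
    apply simp
    done
  then show ?thesis unfolding c1_def s1_def a1_def b1_def c2_def s2_def a2_def b2_def by simp
qed


lemma nn_facts:
  assumes "0 \<le> m" "m \<le> 1"
  shows "(nn m)\<^sup>2 = 1 - m\<^sup>2" "0 \<le> nn m" "nn m \<le> 1"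
proof -
  have "m\<^sup>2 \<le> 1" using assms by (simp add: power_le_one)
  then show "(nn m)\<^sup>2 = 1 - m\<^sup>2" "0 \<le> nn m" "nn m \<le> 1"
    unfolding nn_def using assms by auto
qed

lemma sin_om:
  assumes "0 \<le> m" "m \<le> 1"
  shows "sin (om k m) = sqrt ((nn m * sin k)\<^sup>2 + m\<^sup>2)"
proof -
  note nf = nn_facts[OF assms]
  have "\<bar>nn m * cos k\<bar> \<le> 1"
    using nf abs_cos_le_one[of k] by (simp add: abs_mult mult_le_one)
  then have "sin (om k m) = sqrt (1 - (nn m * cos k)\<^sup>2)"
    unfolding om_def by (rule sin_arccos_abs)
  also have "1 - (nn m * cos k)\<^sup>2 = (nn m * sin k)\<^sup>2 + m\<^sup>2"
  proof -
    have "(nn m * cos k)\<^sup>2 + (nn m * sin k)\<^sup>2 = (nn m)\<^sup>2"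
      by (simp add: power_mult_distrib flip: distrib_left)
    then show ?thesis using nf(1) by linarith
  qed
  finally show ?thesis .
qed

lemma r2_zero:
  assumes "0 \<le> m" "m \<le> 1" "- pi < k" "k < pi"
    and "sqrt ((nn m * sin k)\<^sup>2 + m\<^sup>2) = 0"
  shows "k = 0" "m = 0"
proof -
  from assms(5) have h: "(nn m * sin k)\<^sup>2 + m\<^sup>2 = 0" using real_sqrt_eq_0_iff by blast
  then show "m = 0" by (simp add: sum_power2_eq_zero_iff)
  then have "nn m = 1" by (simp add: nn_def)
  then have "(sin k)\<^sup>2 + m\<^sup>2 = 0" using h by simp
  then have "sin k = 0" by (simp add: sum_power2_eq_zero_iff)
  then show "k = 0" using sin_eq_0_pi assms(3,4) by blast
qed

lemma om_00: "om 0 0 = 0" by (simp add: om_def nn_def)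

lemma beta_form:
  assumes "0 \<le> m" "m \<le> 1" "- pi < k" "k < pi" "sqrt (k\<^sup>2 + m\<^sup>2) \<noteq> 0"
  defines "x2 \<equiv> nn m * sin k"
  defines "r1 \<equiv> sqrt (k\<^sup>2 + m\<^sup>2)" and "r2 \<equiv> sqrt (x2\<^sup>2 + m\<^sup>2)"
  shows "beta k m = 1 - ((k / r1) * (x2 / r2) + (m / r1) * (m / r2))"
    and "\<bar>(k / r1) * (x2 / r2) + (m / r1) * (m / r2)\<bar> \<le> 1"
    and "r2 \<noteq> 0" and "sin (om k m) = r2"
proof -
  show r2nz: "r2 \<noteq> 0"
  proof
    assume "r2 = 0"
    then have "k = 0" "m = 0" using r2_zero[OF assms(1-4)] unfolding r2_def x2_def by auto
    then show False using assms(5) by simp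
  qed
  have r1nz: "r1 \<noteq> 0" using assms(5) r1_def by simp
  show so: "sin (om k m) = r2" unfolding r2_def x2_def by (rule sin_om[OF assms(1,2)])
  define a1 where "a1 = k / r1"
  define b1 where "b1 = m / r1"
  define a2 where "a2 = x2 / r2"
  define b2 where "b2 = m / r2"
  have r1sq: "r1\<^sup>2 = k\<^sup>2 + m\<^sup>2" unfolding r1_def by simp
  have r2sq: "r2\<^sup>2 = x2\<^sup>2 + m\<^sup>2" unfolding r2_def by simp
  have n1: "a1\<^sup>2 + b1\<^sup>2 = 1" unfolding a1_def b1_def using r1nz
    by (simp add: power_divide add_divide_distrib[symmetric] r1sq[symmetric])
  have n2: "a2\<^sup>2 + b2\<^sup>2 = 1" unfolding a2_def b2_def using r2nz
    by (simp add: power_divide add_divide_distrib[symmetric] r2sq[symmetric])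
  have b1nn: "b1 \<ge> 0" unfolding b1_def r1_def using assms(1) by simp
  have b2nn: "b2 \<ge> 0" unfolding b2_def r2_def using assms(1) by simp
  have v: "vel k m = a2" unfolding vel_def so a2_def x2_def ..
  have vD: "velD k m = a1" unfolding velD_def a1_def r1_def ..
  have "sqrt ((1 - (vel k m)\<^sup>2) * (1 - (velD k m)\<^sup>2)) = sqrt ((b2 * b1)\<^sup>2)"
  proof -
    have "1 - a2\<^sup>2 = b2\<^sup>2" "1 - a1\<^sup>2 = b1\<^sup>2" using n1 n2 by linarith+
    then show ?thesis unfolding v vD by (simp add: power_mult_distrib)
  qed
  also have "\<dots> = b2 * b1" using b1nn b2nn by simp
  finally have "beta k m = 1 - (a1 * a2 + b1 * b2)" unfolding beta_def v vD by (simp add: algebra_simps)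
  then show "beta k m = 1 - ((k / r1) * (x2 / r2) + (m / r1) * (m / r2))"
    unfolding a1_def a2_def b1_def b2_def .
  have "2 * \<bar>a1 * a2\<bar> \<le> a1\<^sup>2 + a2\<^sup>2"
    using sum_squares_bound[of "\<bar>a1\<bar>" "\<bar>a2\<bar>"] by (simp add: abs_mult)
  moreover have "2 * \<bar>b1 * b2\<bar> \<le> b1\<^sup>2 + b2\<^sup>2"
    using sum_squares_bound[of "\<bar>b1\<bar>" "\<bar>b2\<bar>"] by (simp add: abs_mult)
  ultimately have "\<bar>a1 * a2 + b1 * b2\<bar> \<le> 1" using n1 n2 by linarith
  then show "\<bar>(k / r1) * (x2 / r2) + (m / r1) * (m / r2)\<bar> \<le> 1"
    unfolding a1_def a2_def b1_def b2_def .
qed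


lemma cos_mu_bound:
  assumes "0 \<le> m" "m \<le> 1" "- pi < k" "k < pi"
    and eig: "is_eigenvalue2 (Vmat k m t) (cis \<mu>)"
  shows "cos (alpha k m * t) - \<bar>beta k m\<bar> \<le> cos \<mu>"
proof -
  define x2 where "x2 = nn m * sin k"
  define r1 where "r1 = sqrt (k\<^sup>2 + m\<^sup>2)"
  define r2 where "r2 = sqrt (x2\<^sup>2 + m\<^sup>2)"
  define \<rho> where "\<rho> = (k / r1) * (x2 / r2) + (m / r1) * (m / r2)"
  have cm: "cos \<mu> = cos (r1 * t) * cos (r2 * (om k m / sin (om k m) * t)) + sin (r1 * t) * sin (r2 * (om k m / sin (om k m) * t)) * \<rho>"
    using V_cos[OF eig] unfolding \<rho>_def r1_def r2_def x2_def .
  show ?thesis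
  proof (cases "r1 = 0")
    case True
    then have "k = 0" "m = 0" unfolding r1_def by (auto simp: sum_power2_eq_zero_iff)
    then have "alpha k m = 0" "om k m = 0" by (simp_all add: alpha_def omD_def om_00)
    moreover have "r1 = 0" by fact
    ultimately have "cos \<mu> = 1" using cm by simp
    moreover have "cos (alpha k m * t) \<le> 1" by simp
    moreover have "0 \<le> \<bar>beta k m\<bar>" by simp
    ultimately show ?thesis by linarith
  next
    case False
    have r1nz: "sqrt (k\<^sup>2 + m\<^sup>2) \<noteq> 0" using False r1_def by simp
    note bf = beta_form[OF assms(1-4) r1nz]
    have r2nz: "r2 \<noteq> 0" using bf(3) unfolding r2_def x2_def .
    have so: "sin (om k m) = r2" using bf(4) unfolding r2_def x2_def .
    have r2t: "r2 * (om k m / sin (om k m) * t) = om k m * t" using r2nz so by simp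
    have be: "beta k m = 1 - \<rho>" using bf(1) unfolding \<rho>_def r1_def r2_def x2_def .
    have al: "alpha k m * t = r1 * t - om k m * t"
      unfolding alpha_def omD_def r1_def by (simp add: algebra_simps)
    define s1 where "s1 = sin (r1 * t)"
    define s2 where "s2 = sin (om k m * t)"
    have ca: "cos (alpha k m * t) = cos (r1 * t) * cos (om k m * t) + s1 * s2"
      unfolding al s1_def s2_def by (rule cos_diff)
    have cm2: "cos \<mu> = cos (alpha k m * t) - s1 * s2 * beta k m"
      using cm unfolding r2t ca be s1_def[symmetric] s2_def[symmetric] by (simp add: algebra_simps)
    have "\<bar>s1 * s2\<bar> \<le> 1" unfolding s1_def s2_def abs_mult
      by (rule mult_le_one) simp_all
    then have "\<bar>s1 * s2 * beta k m\<bar> \<le> \<bar>beta k m\<bar>"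
      unfolding abs_mult[of "s1 * s2"] by (simp add: mult_left_le_one_le)
    then show ?thesis using cm2 by linarith
  qed
qed

lemma beta_bound:
  assumes "0 \<le> m" "m \<le> 1" "- pi < k" "k < pi"
  shows "\<bar>beta k m\<bar> \<le> 2"
proof (cases "sqrt (k\<^sup>2 + m\<^sup>2) = 0")
  case True
  then have "k = 0" "m = 0" by (auto simp: sum_power2_eq_zero_iff)
  then show ?thesis by (simp add: beta_def vel_def velD_def)
next
  case False
  note bf = beta_form[OF assms False]
  show ?thesis unfolding bf(1) using bf(2) by linarith
qed

lemma alpha_bound:
  assumes "0 \<le> m" "m \<le> 1" "\<bar>k\<bar> \<le> kb"
  shows "\<bar>alpha k m\<bar> \<le> kb + 1 + pi"
proof -
  note nf = nn_facts[OF assms(1,2)]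
  have "\<bar>nn m * cos k\<bar> \<le> 1"
    using nf abs_cos_le_one[of k] by (simp add: abs_mult mult_le_one)
  then have o: "0 \<le> om k m" "om k m \<le> pi" unfolding om_def
    using arccos_lbound arccos_ubound by (auto simp: abs_le_iff)
  have "omD k m \<le> \<bar>k\<bar> + \<bar>m\<bar>" unfolding omD_def by (rule sqrt_sum_squares_le_sum_abs)
  then have h: "omD k m \<le> kb + 1" using assms by simp
  have "0 \<le> omD k m" unfolding omD_def by simp
  then show ?thesis unfolding alpha_def using o h by (simp add: abs_le_iff)
qed


theorem lemma3:
  fixes m kb t :: real and N :: nat
  assumes "0 \<le> m" "m \<le> 1"
    and "0 \<le> kb" "kb < pi"
    and "N > 0"
    and "beta_bar kb m \<le> 1 - cos (pi / (2 * real N))"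
    and "0 \<le> t"
    and "alpha_bar kb m * t \<le> arccos (cos (pi / (2 * real N)) + beta_bar kb m)"
  shows "\<forall>k \<in> {-kb..kb}. \<forall>\<mu>. 0 \<le> \<mu> \<and> \<mu> \<le> pi \<and>
           (\<forall>l. is_eigenvalue2 (Vmat k m t) l \<longleftrightarrow> l = cis \<mu> \<or> l = cis (- \<mu>)) \<longrightarrow>
           real N * \<mu> \<le> gfun kb m N t \<and> gfun kb m N t \<le> pi / 2"
proof (intro ballI allI impI)
  fix k \<mu>
  assume k: "k \<in> {-kb..kb}"
  assume H: "0 \<le> \<mu> \<and> \<mu> \<le> pi \<and>
           (\<forall>l. is_eigenvalue2 (Vmat k m t) l \<longleftrightarrow> l = cis \<mu> \<or> l = cis (- \<mu>))"
  then have mu: "0 \<le> \<mu>" "\<mu> \<le> pi" and eig: "is_eigenvalue2 (Vmat k m t) (cis \<mu>)" by auto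
  define ab where "ab = alpha_bar kb m"
  define bb where "bb = beta_bar kb m"
  define c where "c = cos (pi / (2 * real N))"
  have kpi: "- pi < k" "k < pi" using k assms(4) by auto
  have bdA: "bdd_above ((\<lambda>k. \<bar>alpha k m\<bar>) ` {-kb..kb})"
    by (rule bdd_aboveI[where M = "kb + 1 + pi"]) (auto intro!: alpha_bound[OF assms(1,2)])
  have bdB: "bdd_above ((\<lambda>k. \<bar>beta k m\<bar>) ` {-kb..kb})"
  proof (rule bdd_aboveI[where M = 2])
    fix y assume "y \<in> (\<lambda>k. \<bar>beta k m\<bar>) ` {-kb..kb}"
    then obtain k' where "k' \<in> {-kb..kb}" "y = \<bar>beta k' m\<bar>" by auto
    then show "y \<le> 2" using beta_bound[OF assms(1,2)] assms(4) by auto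
  qed
  have aA: "\<bar>alpha k m\<bar> \<le> ab" unfolding ab_def alpha_bar_def by (rule cSUP_upper[OF k bdA])
  have bB: "\<bar>beta k m\<bar> \<le> bb" unfolding bb_def beta_bar_def by (rule cSUP_upper[OF k bdB])
  have ab0: "0 \<le> ab" using aA by linarith
  have bb0: "0 \<le> bb" using bB by linarith
  have Npos: "real N > 0" using assms(5) by simp
  have piN: "0 < pi / (2 * real N)" "pi / (2 * real N) \<le> pi / 2"
    using Npos by (auto simp: field_simps)
  have c0: "0 \<le> c" unfolding c_def by (rule cos_ge_zero) (use piN in auto)
  have c1: "c + bb \<le> 1" using assms(6) unfolding c_def bb_def by linarith
  have abt0: "0 \<le> ab * t" using ab0 assms(7) by simp
  have abt: "ab * t \<le> arccos (c + bb)" using assms(8) unfolding ab_def bb_def c_def .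
  have arc_pi: "arccos (c + bb) \<le> pi" by (rule arccos_ubound) (use c0 bb0 c1 in auto)
  have "cos (arccos (c + bb)) \<le> cos (ab * t)"
    by (rule cos_monotone_0_pi_le[OF abt0 abt arc_pi])
  then have cab: "c + bb \<le> cos (ab * t)" using c0 bb0 c1 by simp
  have "\<bar>alpha k m\<bar> * t \<le> ab * t" using aA assms(7) by (simp add: mult_right_mono)
  then have "cos (ab * t) \<le> cos (\<bar>alpha k m\<bar> * t)"
    by (intro cos_monotone_0_pi_le) (use assms(7) abt arc_pi in auto)
  also have "cos (\<bar>alpha k m\<bar> * t) = cos (alpha k m * t)"
    by (cases "alpha k m \<ge> 0") (simp_all add: abs_if)
  finally have ca: "cos (ab * t) \<le> cos (alpha k m * t)" .
  define w where "w = cos (ab * t) - bb"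
  have wle: "w \<le> cos \<mu>" using cos_mu_bound[OF assms(1,2) kpi eig] ca bB unfolding w_def by linarith
  have w0: "c \<le> w" using cab unfolding w_def by linarith
  have w1: "w \<le> 1" using bb0 unfolding w_def using cos_le_one[of "ab * t"] by linarith
  have "\<mu> = arccos (cos \<mu>)" using mu by (simp add: arccos_cos)
  also have "\<dots> \<le> arccos w" by (rule arccos_le_arccos) (use wle w0 c0 in auto)
  finally have muw: "\<mu> \<le> arccos w" .
  have g: "gfun kb m N t = real N * arccos w" unfolding gfun_def w_def ab_def bb_def ..
  show "real N * \<mu> \<le> gfun kb m N t \<and> gfun kb m N t \<le> pi / 2"
  proof
    show "real N * \<mu> \<le> gfun kb m N t" unfolding g using muw by (simp add: mult_left_mono)
    have "arccos w \<le> arccos c" by (rule arccos_le_arccos) (use w0 w1 c0 in auto)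
    also have "arccos c = pi / (2 * real N)" unfolding c_def using piN by (simp add: arccos_cos)
    finally have "real N * arccos w \<le> real N * (pi / (2 * real N))" by (rule mult_left_mono) simp
    also have "\<dots> = pi / 2" using Npos by simp
    finally show "gfun kb m N t \<le> pi / 2" unfolding g .
  qed
qed

end
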